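(* Let $p(C_1),\dots,p(C_K)>0$ be probabilities summing to $1$ and let $\mathcal E=-\sum_{j=1}^K p(C_j)\log p(C_j)$. Let $\{t_1,\dots,t_n\}$ be partitioned into $K$ nonempty clusters $C_1,\dots,C_K$ with sizes $n_j$, $n_{\min}=\min_j n_j$, $\bar p(C_j)=n_j/n$, and let $g^{\mathrm{True}}\in\{0,1\}^{n\times K}$ with $g^{\mathrm{True}}_{ij}=1$ iff $t_i\in C_j$. Let $g\in\{0,1\}^{n\times K}$ have exactly one entry $1$ in each row, $\hat p(C_j)=\frac1n\sum_i g_{ij}$, $\hat{\mathcal E}=-\sum_j \hat p(C_j)\log\hat p(C_j)$ (with $0\log 0=0$), and $M_{\mathrm{error}}=\sum_{j}\sum_{i}\mathbb I(g_{ij}\ne g^{\mathrm{True}}_{ij})$. Suppose there exists $0<c_2<1$ with $2Kn_{\min}/n\ge c_2$. Then $$|\mathcal E-\hat{\mathcal E}|\le \sum_{j=1}^K\left(\left|\frac{p(C_j)-\bar p(C_j)}{p(C_j)}\right|+\log\!\left(\frac{1}{p(C_j)}\right)\left|p(C_j)-\bar p(C_j)\right|\right)+h\!\left(\frac{2K}{c_2}\right)\left|\frac1n M_{\mathrm{error}}\right|,$$ where $h(x)=x+\log x$.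
   Context: $\mathcal E$ is the true entropy of the cluster distribution, $\bar p$ the empirical cluster proportions, and $\hat{\mathcal E}$ the entropy from an estimated clustering whose cluster labels are aligned with the true ones. *)

theory Defs
  imports Complex_Main
begin

definition negxlogx :: "real \<Rightarrow> real" where
  "negxlogx x = (if x = 0 then 0 else - x * ln x)"

definition entropy :: "nat \<Rightarrow> (nat \<Rightarrow> real) \<Rightarrow> real" where
  "entropy K q = (\<Sum>j<K. negxlogx (q j))"

definition hfun :: "real \<Rightarrow> real" where
  "hfun x = x + ln x"

end

theory Submission
  imports Defs
begin

lemma negxlogx_diff1:
  assumes "0 < p" "p \<le> 1" "0 < q" "q \<le> 1"
  shows "\<bar>negxlogx p - negxlogx q\<bar> \<le> \<bar>(p - q) / p\<bar> + ln (1 / p) * \<bar>p - q\<bar>"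
proof -
  have np: "negxlogx p = - p * ln p" and nq: "negxlogx q = - q * ln q"
    using assms by (auto simp: negxlogx_def)
  have e: "p * ln p - q * ln q = (p - q) * ln p + q * ln (p / q)"
    using assms by (simp add: ln_div algebra_simps)
  have u0: "ln (p / q) \<le> p / q - 1" using assms by (intro ln_le_minus_one) auto
  have u: "q * ln (p / q) \<le> p - q"
  proof -
    have "q * ln (p / q) \<le> q * (p / q - 1)" using u0 assms by (intro mult_left_mono) auto
    also have "\<dots> = p - q" using assms by (simp add: field_simps)
    finally show ?thesis .
  qed
  have l0: "ln (q / p) \<le> q / p - 1" using assms by (intro ln_le_minus_one) auto
  have "ln (p / q) = - ln (q / p)" using assms by (simp add: ln_div)
  hence l1: "ln (p / q) \<ge> (p - q) / p" using l0 assms by (simp add: field_simps)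
  have l: "q * ln (p / q) \<ge> q * ((p - q) / p)" using l1 assms by (intro mult_left_mono) auto
  have a1: "\<bar>p - q\<bar> \<le> \<bar>p - q\<bar> / p" using assms mult_left_le_one_le[of "\<bar>p - q\<bar>" p] by (simp add: field_simps)
  have a2: "q * ((q - p) / p) \<le> \<bar>p - q\<bar> / p"
  proof -
    have "q * (q - p) \<le> \<bar>p - q\<bar>"
    proof (cases "q \<ge> p")
      case True
      then show ?thesis using assms mult_left_le_one_le[of "q-p" q] by auto
    next
      case False
      then have "q * (q - p) \<le> 0" using assms by (simp add: mult_nonneg_nonpos)
      then show ?thesis by linarith
    qed
    thus ?thesis using assms by (simp add: divide_right_mono)
  qed
  have a3: "\<bar>(p - q) / p\<bar> = \<bar>p - q\<bar> / p" using assms by simp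
  have lnp: "ln p \<le> 0" using assms by simp
  have a4: "\<bar>(p - q) * ln p\<bar> = ln (1 / p) * \<bar>p - q\<bar>"
    using assms lnp by (simp add: ln_div abs_mult)
  have a5: "- (q * ((p - q) / p)) = q * ((q - p) / p)" by (metis minus_diff_eq minus_divide_left mult_minus_right)
  have D: "\<bar>q * ln (p / q)\<bar> \<le> \<bar>p - q\<bar> / p"
    using u l a1 a2 a5 by linarith
  have "negxlogx p - negxlogx q = - ((p - q) * ln p + q * ln (p / q))" unfolding np nq using e by simp
  hence "\<bar>negxlogx p - negxlogx q\<bar> \<le> \<bar>(p - q) * ln p\<bar> + \<bar>q * ln (p / q)\<bar>" by (simp only: abs_minus_cancel abs_triangle_ineq)
  then show ?thesis unfolding a3 using D a4 by linarith
qed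

lemma negxlogx_lip:
  assumes "0 < a" "a \<le> x" "x \<le> 1" "0 \<le> y" "y \<le> 1"
  shows "\<bar>negxlogx x - negxlogx y\<bar> \<le> max 1 (ln (1 / a)) * \<bar>x - y\<bar>"
proof -
  have x0: "x > 0" using assms by linarith
  have nx: "negxlogx x = - x * ln x" using x0 by (simp add: negxlogx_def)
  have lnx: "ln x \<le> 0" using x0 assms by simp
  have lnxa: "- ln x \<le> ln (1 / a)" using assms x0 by (simp add: ln_div)
  have M1: "1 \<le> max 1 (ln (1 / a))" and M2: "ln (1/a) \<le> max 1 (ln (1 / a))" by auto
  show ?thesis
  proof (cases "y = 0")
    case True
    have "x * (- ln x) \<le> x * ln (1/a)" using lnxa x0 by (intro mult_left_mono) auto
    also have "\<dots> \<le> x * max 1 (ln (1 / a))" using M2 x0 by (intro mult_left_mono) auto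
    finally show ?thesis using True nx x0 lnx by (simp add: negxlogx_def mult.commute abs_mult)
  next
    case False
    hence y0: "y > 0" using assms by simp
    have ny: "negxlogx y = - y * ln y" using y0 by (simp add: negxlogx_def)
    have lny: "ln y \<le> 0" using y0 assms by simp
    show ?thesis
    proof (cases "y \<le> x")
      case True
      have up: "y * ln y \<le> y * ln x" using y0 True by (intro mult_left_mono) auto
      have r0: "ln (x / y) \<le> x / y - 1" using x0 y0 by (intro ln_le_minus_one) auto
      have "ln (y / x) = - ln (x / y)" using x0 y0 by (simp add: ln_div)
      hence "ln (y / x) \<ge> (y - x) / y" using r0 y0 by (simp add: field_simps)
      hence "y * ln (y / x) \<ge> y * ((y - x) / y)" using y0 by (intro mult_left_mono) auto
      hence r1: "y * ln (y / x) \<ge> y - x" using y0 by simp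
      have e: "y * ln y - x * ln x = y * ln (y / x) + (y - x) * ln x"
        using x0 y0 by (simp add: ln_div algebra_simps)
      have r2: "(y - x) * ln x \<ge> 0" using True lnx by (simp add: mult_nonpos_nonpos)
      have u1: "- x * ln x + y * ln y \<le> (x - y) * ln (1/a)"
      proof -
        have "- x * ln x + y * ln y \<le> (x - y) * (- ln x)" using up by (simp add: algebra_simps)
        also have "\<dots> \<le> (x - y) * ln (1/a)" using True lnxa by (intro mult_left_mono) auto
        finally show ?thesis .
      qed
      have u2: "(x - y) * ln (1/a) \<le> (x - y) * max 1 (ln (1 / a))"
        using True M2 by (intro mult_left_mono) auto
      have u3: "(x - y) \<le> (x - y) * max 1 (ln (1 / a))"
        using True M1 mult_left_mono[of 1 "max 1 (ln (1 / a))" "x - y"] by auto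
      have d: "negxlogx x - negxlogx y = y * ln y - x * ln x" unfolding nx ny by simp
      have "\<bar>x - y\<bar> = x - y" using True by simp
      then show ?thesis unfolding d using u1 u2 u3 e r1 r2 nx ny
        by (simp only: abs_le_iff mult.commute[of "max 1 (ln (1 / a))"]) linarith
    next
      case False
      have e1: "y * ln y - x * ln x = x * ln (y / x) + (y - x) * ln y"
        using x0 y0 by (simp add: ln_div algebra_simps)
      have r0: "ln (y / x) \<le> y / x - 1" using x0 y0 by (intro ln_le_minus_one) auto
      have "x * ln (y / x) \<le> x * (y / x - 1)" using r0 x0 by (intro mult_left_mono) auto
      moreover have "x * (y / x - 1) = y - x" using x0 by (simp add: field_simps)
      ultimately have r1: "x * ln (y / x) \<le> y - x" by simp
      have r2: "(y - x) * ln y \<le> 0" using False lny by (simp add: mult_nonneg_nonpos)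
      have e2: "y * ln y - x * ln x = y * ln (y / x) + (y - x) * ln x"
        using x0 y0 by (simp add: ln_div algebra_simps)
      have "ln (y / x) \<ge> 0" using False x0 y0 by simp
      hence r3: "y * ln (y / x) \<ge> 0" using y0 by simp
      have r4': "(y - x) * ln x \<ge> (y - x) * (- ln (1/a))" using False lnxa by (intro mult_left_mono) auto
      hence r4: "(y - x) * ln x \<ge> - ((y - x) * ln (1/a))" by simp
      have u2: "(y - x) * ln (1/a) \<le> (y - x) * max 1 (ln (1 / a))"
        using False M2 by (intro mult_left_mono) auto
      have u3: "(y - x) \<le> (y - x) * max 1 (ln (1 / a))"
        using False M1 mult_left_mono[of 1 "max 1 (ln (1 / a))" "y - x"] by auto
      have d: "negxlogx x - negxlogx y = y * ln y - x * ln x" unfolding nx ny by simp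
      have "\<bar>x - y\<bar> = y - x" using False by simp
      then show ?thesis unfolding d using u2 u3 e1 e2 r1 r2 r3 r4
        by (simp only: abs_le_iff mult.commute[of "max 1 (ln (1 / a))"]) (smt (verit))
    qed
  qed
qed

theorem lemma4:
  fixes K n :: nat
    and p :: "nat \<Rightarrow> real"
    and lab :: "nat \<Rightarrow> nat"
    and g :: "nat \<Rightarrow> nat \<Rightarrow> real"
    and c2 :: real
  assumes p_pos: "\<And>j. j < K \<Longrightarrow> p j > 0"
    and p_sum: "(\<Sum>j<K. p j) = 1"
    and lab_range: "\<And>i. i < n \<Longrightarrow> lab i < K"
    and clusters_nonempty: "\<And>j. j < K \<Longrightarrow> \<exists>i<n. lab i = j"
    and g_01: "\<And>i j. i < n \<Longrightarrow> j < K \<Longrightarrow> g i j \<in> {0, 1}"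
    and g_row: "\<And>i. i < n \<Longrightarrow> \<exists>!j. j < K \<and> g i j = 1"
    and c2_pos: "0 < c2" and c2_lt1: "c2 < 1"
    and nmin_bound:
      "2 * real K * real (Min ((\<lambda>j. card {i. i < n \<and> lab i = j}) ` {..<K})) / real n \<ge> c2"
  shows
    "let nj = (\<lambda>j. card {i. i < n \<and> lab i = j});
         pbar = (\<lambda>j. real (nj j) / real n);
         gTrue = (\<lambda>i j. if lab i = j then (1::real) else 0);
         phat = (\<lambda>j. (1 / real n) * (\<Sum>i<n. g i j));
         Merr = (\<Sum>j<K. \<Sum>i<n. if g i j \<noteq> gTrue i j then (1::real) else 0)
     in \<bar>entropy K p - entropy K phat\<bar>
        \<le> (\<Sum>j<K. \<bar>(p j - pbar j) / p j\<bar> + ln (1 / p j) * \<bar>p j - pbar j\<bar>)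
           + hfun (2 * real K / c2) * \<bar>(1 / real n) * Merr\<bar>"
  proof -
  define nj where "nj = (\<lambda>j. card {i. i < n \<and> lab i = j})"
  define pbar where "pbar = (\<lambda>j. real (nj j) / real n)"
  define gT where "gT = (\<lambda>i j. if lab i = j then (1::real) else 0)"
  define phat where "phat = (\<lambda>j. (1 / real n) * (\<Sum>i<n. g i j))"
  define ind where "ind = (\<lambda>j. (\<Sum>i<n. if g i j \<noteq> gT i j then (1::real) else 0))"
  define Merr where "Merr = (\<Sum>j<K. ind j)"
  define H where "H = hfun (2 * real K / c2)"
  have K0: "K > 0" using p_sum by (cases K) auto
  have n0: "n > 0" using clusters_nonempty[of 0] K0 by auto
  have ple1: "p j \<le> 1" if "j < K" for j
  proof -
    have "p j \<le> (\<Sum>j<K. p j)" using that p_pos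
      by (intro member_le_sum) (auto simp: less_imp_le)
    thus ?thesis using p_sum by simp
  qed
  have njpos: "nj j > 0" if jK: "j < K" for j
  proof -
    obtain i where "i < n" "lab i = j" using clusters_nonempty[OF jK] by auto
    hence "i \<in> {i. i < n \<and> lab i = j}" by auto
    moreover have "finite {i. i < n \<and> lab i = j}" by auto
    ultimately show ?thesis unfolding nj_def by (metis card_gt_0_iff empty_iff)
  qed
  have nj_le: "nj j \<le> n" for j
  proof -
    have "{i. i < n \<and> lab i = j} \<subseteq> {..<n}" by auto
    hence "card {i. i < n \<and> lab i = j} \<le> card {..<n}" by (intro card_mono) auto
    thus ?thesis unfolding nj_def by simp
  qed
  define mn where "mn = Min (nj ` {..<K})"
  have mn_le: "mn \<le> nj j" if "j < K" for j unfolding mn_def using that by (intro Min_le) auto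
  have nb: "2 * real K * real mn / real n \<ge> c2" using nmin_bound unfolding mn_def nj_def by simp
  define a where "a = c2 / (2 * real K)"
  have a0: "a > 0" unfolding a_def using c2_pos K0 by simp
  have a_le_pbar: "a \<le> pbar j" if "j < K" for j
  proof -
    have "c2 \<le> 2 * real K * (real mn / real n)" using nb by simp
    hence "a \<le> real mn / real n" unfolding a_def using K0 by (simp add: field_simps)
    also have "\<dots> \<le> real (nj j) / real n" using mn_le[OF that] n0 by (simp add: divide_right_mono)
    finally show ?thesis unfolding pbar_def .
  qed
  have pbar_pos: "pbar j > 0" if "j < K" for j using njpos[OF that] n0 unfolding pbar_def by simp
  have pbar_le1: "pbar j \<le> 1" for j using nj_le[of j] n0 unfolding pbar_def by simp
  have Hbound: "max 1 (ln (1 / a)) \<le> H"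
  proof -
    have L: "1 / a = 2 * real K / c2" unfolding a_def by simp
    have L1: "2 * real K / c2 \<ge> 1" using K0 c2_pos c2_lt1 by (simp add: field_simps)
    have "ln (2 * real K / c2) \<ge> 0" using L1 by simp
    moreover have "ln (2 * real K / c2) \<le> 2 * real K / c2" using L1 by (intro ln_bound) linarith
    ultimately show ?thesis unfolding H_def hfun_def L using L1 by (split split_max) linarith
  qed
  have sumg: "0 \<le> (\<Sum>i<n. g i j) \<and> (\<Sum>i<n. g i j) \<le> real n" if "j < K" for j
  proof -
    have "(\<Sum>i<n. g i j) \<le> (\<Sum>i<n. (1::real))" proof (intro sum_mono)
      fix i assume "i \<in> {..<n}"
      hence "g i j \<in> {0, 1}" using g_01 that by auto
      thus "g i j \<le> 1" by auto
    qed
    moreover have "0 \<le> (\<Sum>i<n. g i j)" proof (intro sum_nonneg)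
      fix i assume "i \<in> {..<n}"
      hence "g i j \<in> {0, 1}" using g_01 that by auto
      thus "0 \<le> g i j" by auto
    qed
    ultimately show ?thesis by simp
  qed
  have phat_bd: "0 \<le> phat j \<and> phat j \<le> 1" if "j < K" for j
    using sumg[OF that] n0 unfolding phat_def by (simp add: field_simps)
  have nj_sum: "real (nj j) = (\<Sum>i<n. gT i j)" for j
  proof -
    have "(\<Sum>i<n. gT i j) = (\<Sum>i\<in>{x\<in>{..<n}. lab x = j}. 1)"
      unfolding gT_def by (subst sum.inter_filter) auto
    also have "{x\<in>{..<n}. lab x = j} = {i. i < n \<and> lab i = j}" by auto
    finally show ?thesis unfolding nj_def by simp
  qed
  have diffbd: "\<bar>pbar j - phat j\<bar> \<le> (1 / real n) * ind j" if "j < K" for j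
  proof -
    have "\<bar>(\<Sum>i<n. gT i j) - (\<Sum>i<n. g i j)\<bar> = \<bar>\<Sum>i<n. gT i j - g i j\<bar>"
      by (simp add: sum_subtractf)
    also have "\<dots> \<le> (\<Sum>i<n. \<bar>gT i j - g i j\<bar>)" by (rule sum_abs)
    also have "\<dots> = ind j" unfolding ind_def
    proof (intro sum.cong refl)
      fix i assume "i \<in> {..<n}"
      hence "g i j \<in> {0, 1}" using g_01 that by auto
      thus "\<bar>gT i j - g i j\<bar> = (if g i j \<noteq> gT i j then 1 else 0)"
        unfolding gT_def by auto
    qed
    finally have "\<bar>real (nj j) - (\<Sum>i<n. g i j)\<bar> \<le> ind j" using nj_sum by simp
    hence "\<bar>real (nj j) - (\<Sum>i<n. g i j)\<bar> / real n \<le> ind j / real n"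
      using n0 by (simp add: divide_right_mono)
    moreover have "pbar j - phat j = (real (nj j) - (\<Sum>i<n. g i j)) / real n"
      unfolding pbar_def phat_def by (simp add: diff_divide_distrib)
    ultimately show ?thesis by simp
  qed
  have per: "\<bar>negxlogx (p j) - negxlogx (phat j)\<bar>
      \<le> (\<bar>(p j - pbar j) / p j\<bar> + ln (1 / p j) * \<bar>p j - pbar j\<bar>) + H * ((1 / real n) * ind j)"
    if j: "j < K" for j
  proof -
    have A: "\<bar>negxlogx (p j) - negxlogx (pbar j)\<bar> \<le> \<bar>(p j - pbar j) / p j\<bar> + ln (1 / p j) * \<bar>p j - pbar j\<bar>"
      using p_pos[OF j] ple1[OF j] pbar_pos[OF j] pbar_le1[of j] by (rule negxlogx_diff1)
    have B: "\<bar>negxlogx (pbar j) - negxlogx (phat j)\<bar> \<le> max 1 (ln (1 / a)) * \<bar>pbar j - phat j\<bar>"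
      using a0 a_le_pbar[OF j] pbar_le1[of j] phat_bd[OF j] by (intro negxlogx_lip) auto
    have "max 1 (ln (1 / a)) * \<bar>pbar j - phat j\<bar> \<le> H * ((1 / real n) * ind j)"
      using Hbound diffbd[OF j] by (intro mult_mono) auto
    thus ?thesis using A B by linarith
  qed
  have ind0: "0 \<le> ind j" for j unfolding ind_def by (intro sum_nonneg) auto
  have main: "\<bar>entropy K p - entropy K phat\<bar>
      \<le> (\<Sum>j<K. \<bar>(p j - pbar j) / p j\<bar> + ln (1 / p j) * \<bar>p j - pbar j\<bar>) + H * \<bar>(1 / real n) * Merr\<bar>"
  proof -
    have "\<bar>entropy K p - entropy K phat\<bar> = \<bar>\<Sum>j<K. negxlogx (p j) - negxlogx (phat j)\<bar>"
      unfolding entropy_def by (simp add: sum_subtractf)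
    also have "\<dots> \<le> (\<Sum>j<K. \<bar>negxlogx (p j) - negxlogx (phat j)\<bar>)" by (rule sum_abs)
    also have "\<dots> \<le> (\<Sum>j<K. (\<bar>(p j - pbar j) / p j\<bar> + ln (1 / p j) * \<bar>p j - pbar j\<bar>) + H * ((1 / real n) * ind j))"
      using per by (intro sum_mono) auto
    also have "\<dots> = (\<Sum>j<K. \<bar>(p j - pbar j) / p j\<bar> + ln (1 / p j) * \<bar>p j - pbar j\<bar>) + H * ((1 / real n) * Merr)"
      unfolding Merr_def by (simp add: sum.distrib sum_distrib_left)
    also have "(1 / real n) * Merr = \<bar>(1 / real n) * Merr\<bar>"
      unfolding Merr_def using ind0 by (simp add: sum_nonneg)
    finally show ?thesis .
  qed
  show ?thesis using main unfolding Let_def nj_def pbar_def gT_def phat_def Merr_def ind_def H_def .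
qed

end
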